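(* Fix $p\in(0,1)$. Consider the Markov chain $(X_t)_{t\ge0}$ on $[0,1]$ given by $X_{t+1}=\max(X_t,U_{t+1})$ if $B_{t+1}=1$ and $X_{t+1}=\min(X_t,U_{t+1})$ if $B_{t+1}=0$, where $(B_t)_{t\ge1}$ are IID Bernoulli($p$) and $(U_t)_{t\ge1}$ are IID uniform on $[0,1]$, independent of the $B$'s (this is the evolution of a single site of the fitness model). This chain has a unique stationary distribution, whose CDF $F_p$ and density $f_p$ are $$F_p(u)=\frac{(1-p)u}{(1-p)u+p(1-u)},\qquad f_p(u)=\frac{p}{1-p}\Big(\frac{F_p(u)}{u}\Big)^2=\frac{p(1-p)}{((1-2p)u^2+p)^2}.$$ *)

theory Defs
  imports "HOL-Probability.Probability"
begin

definition fitness_step :: "real \<times> bool \<times> real \<Rightarrow> real" where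
  "fitness_step = (\<lambda>(x, b, u). if b then max x u else min x u)"

definition innovation :: "real \<Rightarrow> (bool \<times> real) measure" where
  "innovation p = measure_pmf (bernoulli_pmf p) \<Otimes>\<^sub>M uniform_measure lborel {0..1}"

text \<open>mu is a stationary distribution of the chain on [0,1]: a Borel probability
  measure concentrated on [0,1] such that, if X ~ mu is independent of (B,U),
  the next state has law mu again.\<close>
definition fitness_stationary :: "real \<Rightarrow> real measure \<Rightarrow> bool" where
  "fitness_stationary p \<mu> \<longleftrightarrow>
     prob_space \<mu> \<and> sets \<mu> = sets borel \<and> emeasure \<mu> {0..1} = 1 \<and>
     distr (\<mu> \<Otimes>\<^sub>M innovation p) borel fitness_step = \<mu>"

definition F_p :: "real \<Rightarrow> real \<Rightarrow> real" where
  "F_p p u = (1 - p) * u / ((1 - p) * u + p * (1 - u))"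

definition f_p :: "real \<Rightarrow> real \<Rightarrow> real" where
  "f_p p u = p * (1 - p) / ((1 - 2 * p) * u + p) ^ 2"

end

theory Submission
  imports Defs
begin

lemma step_meas: assumes "sets M = sets borel" shows "fitness_step \<in> borel_measurable (M \<Otimes>\<^sub>M innovation p)"
proof -
  have e: "fitness_step = (\<lambda>z. if fst (snd z) then max (fst z) (snd (snd z)) else min (fst z) (snd (snd z)))"
    by (auto simp: fitness_step_def fun_eq_iff)
  have s: "sets (M \<Otimes>\<^sub>M innovation p) = sets (borel \<Otimes>\<^sub>M (count_space UNIV \<Otimes>\<^sub>M borel))"
    unfolding innovation_def
    by (intro sets_pair_measure_cong refl assms) (auto simp: sets_measure_pmf_count_space)
  show ?thesis unfolding e by (subst measurable_cong_sets[OF s refl]) measurable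
qed

lemma inner_unif_T:
  assumes "0 \<le> u" "u \<le> 1"
  shows "(\<integral>\<^sup>+v. indicator {..u} (max x v) \<partial>uniform_measure lborel {0..1::real}) = ennreal (if x \<le> u then u else 0)"
proof -
  have "(\<integral>\<^sup>+v. indicator {..u} (max x v) \<partial>uniform_measure lborel {0..1::real})
     = (\<integral>\<^sup>+v. indicator {..u} (max x v) * indicator {0..1} v \<partial>lborel) / emeasure lborel {0..1::real}"
    by (rule nn_integral_uniform_measure) auto
  also have "(\<lambda>v. indicator {..u} (max x v) * indicator {0..1} v :: ennreal) = (\<lambda>v. (if x \<le> u then 1 else 0) * indicator {0..u} v)"
    using assms by (auto simp: indicator_def fun_eq_iff)
  also have "(\<integral>\<^sup>+v. (if x \<le> u then 1 else 0) * indicator {0..u} v \<partial>lborel) = (if x \<le> u then 1 else 0) * emeasure lborel {0..u}"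
    by (subst nn_integral_cmult_indicator) auto
  finally show ?thesis using assms by (simp add: divide_ennreal_def)
qed

lemma inner_unif_F:
  assumes "0 \<le> u" "u \<le> 1"
  shows "(\<integral>\<^sup>+v. indicator {..u} (min x v) \<partial>uniform_measure lborel {0..1::real}) = ennreal (if x \<le> u then 1 else u)"
proof -
  have "(\<integral>\<^sup>+v. indicator {..u} (min x v) \<partial>uniform_measure lborel {0..1::real})
     = (\<integral>\<^sup>+v. indicator {..u} (min x v) * indicator {0..1} v \<partial>lborel) / emeasure lborel {0..1::real}"
    by (rule nn_integral_uniform_measure) auto
  also have "(\<lambda>v. indicator {..u} (min x v) * indicator {0..1} v :: ennreal) = (\<lambda>v. indicator (if x \<le> u then {0..1} else {0..u}) v)"
    using assms by (auto simp: indicator_def fun_eq_iff)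
  also have "(\<integral>\<^sup>+v. indicator (if x \<le> u then {0..1} else {0..u}) v \<partial>lborel) = emeasure lborel (if x \<le> u then {0..1} else {0..u})"
    by (subst nn_integral_indicator) auto
  finally show ?thesis using assms by (simp add: divide_ennreal_def)
qed

lemma inner:
  assumes "0 \<le> u" "u \<le> 1" "0 \<le> p" "p \<le> 1"
  shows "(\<integral>\<^sup>+y. indicator {..u} (fitness_step (x,y)) \<partial>innovation p) = ennreal (if x \<le> u then p*u + (1-p) else (1-p)*u)"
proof -
  interpret U: prob_space "uniform_measure lborel {0..1::real}"
    by (rule prob_space_uniform_measure) auto
  have "(\<integral>\<^sup>+y. indicator {..u} (fitness_step (x,y)) \<partial>innovation p)
    = (\<integral>\<^sup>+b. \<integral>\<^sup>+v. indicator {..u} (fitness_step (x,b,v)) \<partial>uniform_measure lborel {0..1::real} \<partial>measure_pmf (bernoulli_pmf p))"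
    unfolding innovation_def
    by (subst U.nn_integral_fst[symmetric]) (auto simp: fitness_step_def)
  also have "\<dots> = (\<integral>\<^sup>+b. ennreal (pmf (bernoulli_pmf p) b) * (\<integral>\<^sup>+v. indicator {..u} (fitness_step (x,b,v)) \<partial>uniform_measure lborel {0..1::real}) \<partial>count_space UNIV)"
    by (rule nn_integral_measure_pmf)
  also have "\<dots> = ennreal p * ennreal (if x \<le> u then u else 0) + ennreal (1-p) * ennreal (if x \<le> u then 1 else u)"
    using assms
    by (simp add: nn_integral_count_space_finite UNIV_bool fitness_step_def inner_unif_T inner_unif_F add.commute)
  also have "\<dots> = ennreal (if x \<le> u then p*u + (1-p) else (1-p)*u)"
    using assms by (auto simp: ennreal_mult[symmetric] ennreal_plus[symmetric] simp del: ennreal_plus)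
  finally show ?thesis .
qed

lemma innov_prob: "0 \<le> p \<Longrightarrow> p \<le> 1 \<Longrightarrow> prob_space (innovation p)"
  unfolding innovation_def
  by (intro prob_space_pair prob_space_measure_pmf prob_space_uniform_measure) auto

lemma cdf_step:
  assumes mu: "prob_space \<mu>" "sets \<mu> = sets borel" and u: "0 \<le> u" "u \<le> 1" and p: "0 \<le> p" "p \<le> 1"
  shows "measure (distr (\<mu> \<Otimes>\<^sub>M innovation p) borel fitness_step) {..u}
     = (1-p)*u + (p*u + (1-p)*(1-u)) * measure \<mu> {..u}"
proof -
  interpret N: prob_space "innovation p" using innov_prob p .
  interpret M: prob_space \<mu> by fact
  note sm = step_meas[OF mu(2), of p]
  have ms: "{..u} \<in> sets \<mu>" using mu by simp
  define a where "a = p*u + (1-p)*(1-u)"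
  define b where "b = (1-p)*u"
  have a0: "a \<ge> 0" "b \<ge> 0" using u p by (auto simp: a_def b_def)
  have "emeasure (distr (\<mu> \<Otimes>\<^sub>M innovation p) borel fitness_step) {..u}
     = (\<integral>\<^sup>+z. indicator {..u} z \<partial>distr (\<mu> \<Otimes>\<^sub>M innovation p) borel fitness_step)"
    by (subst nn_integral_indicator) auto
  also have "\<dots> = (\<integral>\<^sup>+z. indicator {..u} (fitness_step z) \<partial>(\<mu> \<Otimes>\<^sub>M innovation p))"
    by (rule nn_integral_distr[OF sm]) auto
  also have "\<dots> = (\<integral>\<^sup>+x. \<integral>\<^sup>+y. indicator {..u} (fitness_step (x,y)) \<partial>innovation p \<partial>\<mu>)"
    by (rule N.nn_integral_fst[symmetric]) (use sm in measurable)
  also have "\<dots> = (\<integral>\<^sup>+x. ennreal b + ennreal a * indicator {..u} x \<partial>\<mu>)"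
    apply (rule nn_integral_cong)
    apply (subst inner[OF u p])
    using u p a0 by (auto simp: indicator_def a_def b_def ennreal_plus[symmetric] simp del: ennreal_plus intro!: arg_cong[where f=ennreal]; simp add: algebra_simps)
  also have "\<dots> = ennreal b + ennreal a * emeasure \<mu> {..u}"
    using ms by (subst nn_integral_add) (auto simp: M.emeasure_space_1 nn_integral_cmult_indicator)
  also have "\<dots> = ennreal (b + a * measure \<mu> {..u})"
    using a0 by (simp add: M.emeasure_eq_measure ennreal_mult ennreal_plus)
  finally have e: "emeasure (distr (\<mu> \<Otimes>\<^sub>M innovation p) borel fitness_step) {..u} = ennreal (b + a * measure \<mu> {..u})" .
  have "0 \<le> b + a * measure \<mu> {..u}" using a0 by simp
  then show ?thesis unfolding measure_def[of _ "{..u}"] e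
    by (simp only: enn2real_ennreal a_def b_def measure_def)
qed

lemma hlp: "(q::real) \<noteq> 0 \<Longrightarrow> p / q * (q^2 / E) = p * q / E"
  by (simp add: power2_eq_square)

lemma denom_pos:
  fixes p u :: real
  assumes "0 < p" "p < 1" "0 \<le> u" "u \<le> 1"
  shows "(1 - p) * u + p * (1 - u) > 0"
proof (cases "u = 0")
  case True then show ?thesis using assms by simp
next
  case False then have "(1 - p) * u > 0" using assms by simp
  moreover have "p * (1 - u) \<ge> 0" using assms by simp
  ultimately show ?thesis by linarith
qed

lemma stat_cdf:
  assumes p: "0 < p" "p < 1" and st: "fitness_stationary p \<mu>" and u: "0 \<le> u" "u \<le> 1"
  shows "measure \<mu> {..u} = F_p p u"
proof -
  have mu: "prob_space \<mu>" "sets \<mu> = sets borel" and eq: "distr (\<mu> \<Otimes>\<^sub>M innovation p) borel fitness_step = \<mu>"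
    using st by (auto simp: fitness_stationary_def)
  define G where "G = measure \<mu> {..u}"
  have "G = (1-p)*u + (p*u + (1-p)*(1-u)) * G"
    using cdf_step[OF mu u, of p] p unfolding eq G_def by simp
  then have "G * ((1 - p) * u + p * (1 - u)) = (1-p)*u"
    by (simp add: algebra_simps)
  then show ?thesis using denom_pos[OF p u] unfolding F_p_def G_def[symmetric]
    by (simp add: field_simps)
qed

lemma cdf_outside:
  assumes "prob_space M" "sets M = sets borel" "measure M {..0::real} = 0" "measure M {..1} = 1"
  shows "u < 0 \<Longrightarrow> measure M {..u} = 0" "1 < u \<Longrightarrow> measure M {..u} = 1"
proof -
  interpret prob_space M by fact
  show "u < 0 \<Longrightarrow> measure M {..u} = 0"
    using finite_measure_mono[of "{..u}" "{..0}"] assms(2,3) measure_nonneg[of M "{..u}"] by force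
  show "1 < u \<Longrightarrow> measure M {..u} = 1"
    using finite_measure_mono[of "{..1}" "{..u}"] assms(2,4) prob_le_1[of "{..u}"] by force
qed

definition Fext :: "real \<Rightarrow> real \<Rightarrow> real" where
  "Fext p u = (if u < 0 then 0 else if 1 < u then 1 else F_p p u)"

lemma stat_cdf_all:
  assumes p: "0 < p" "p < 1" and st: "fitness_stationary p \<mu>"
  shows "measure \<mu> {..u} = Fext p u"
proof -
  have mu: "prob_space \<mu>" "sets \<mu> = sets borel" and one: "emeasure \<mu> {0..1} = 1"
    using st by (auto simp: fitness_stationary_def)
  interpret prob_space \<mu> by fact
  have m0: "measure \<mu> {..0} = 0" using stat_cdf[OF p st, of 0] by (simp add: F_p_def)
  have "measure \<mu> {0..1} = 1" using one by (simp add: emeasure_eq_measure)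
  then have "measure \<mu> {0..1} \<le> measure \<mu> {..1}" 
    using finite_measure_mono[of "{0..1}" "{..1}"] mu by force
  then have m1: "measure \<mu> {..1} = 1" using \<open>measure \<mu> {0..1} = 1\<close> prob_le_1[of "{..1}"] by linarith
  show ?thesis using cdf_outside[OF mu m0 m1] stat_cdf[OF p st] unfolding Fext_def by auto
qed

lemma F_deriv:
  assumes p: "0 < p" "p < 1" and x: "0 \<le> x" "x \<le> 1"
  shows "(F_p p has_real_derivative f_p p x) (at x)"
proof -
  have d: "(1 - p) * x + p * (1 - x) \<noteq> 0" using denom_pos[OF p x] by simp
  have "(F_p p has_real_derivative ((1-p) * ((1 - p) * x + p * (1 - x)) - (1-p)*x*((1-p) - p)) / ((1 - p) * x + p * (1 - x))^2) (at x)"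
    unfolding F_p_def[abs_def]
    apply (rule derivative_eq_intros refl)+
    using d apply (simp_all add: power2_eq_square)
    done
  moreover have "((1-p) * ((1 - p) * x + p * (1 - x)) - (1-p)*x*((1-p) - p)) / ((1 - p) * x + p * (1 - x))^2 = f_p p x"
    unfolding f_p_def by (simp add: algebra_simps)
  ultimately show ?thesis by simp
qed

definition mu0 :: "real \<Rightarrow> real measure" where
  "mu0 p = density lborel (\<lambda>u. ennreal (indicator {0..1} u * f_p p u))"

lemma mu0_cdf:
  assumes p: "0 < p" "p < 1" and u: "0 \<le> u" "u \<le> 1"
  shows "emeasure (mu0 p) {..u} = ennreal (F_p p u)"
proof -
  have "emeasure (mu0 p) {..u} = (\<integral>\<^sup>+x. ennreal (indicator {0..1} x * f_p p x) * indicator {..u} x \<partial>lborel)"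
    unfolding mu0_def by (subst emeasure_density) (auto simp: f_p_def)
  also have "\<dots> = (\<integral>\<^sup>+x. ennreal (f_p p x) * indicator {0..u} x \<partial>lborel)"
    using u by (intro nn_integral_cong) (auto simp: indicator_def)
  also have "\<dots> = ennreal (F_p p u - F_p p 0)"
  proof (rule nn_integral_has_integral_lebesgue')
    show "0 \<le> f_p p x" for x using p by (simp add: f_p_def)
    show "(f_p p has_integral F_p p u - F_p p 0) {0..u}"
      using u F_deriv[OF p]
      by (intro fundamental_theorem_of_calculus)
         (auto simp: has_real_derivative_iff_has_vector_derivative[symmetric] intro: has_field_derivative_at_within)
  qed
  finally show ?thesis by (simp add: F_p_def)
qed

lemma mu0_basic:
  assumes p: "0 < p" "p < 1"
  shows "prob_space (mu0 p)" "sets (mu0 p) = sets borel" "emeasure (mu0 p) {0..1} = 1"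
proof -
  show s: "sets (mu0 p) = sets borel" by (simp add: mu0_def)
  have "emeasure (mu0 p) {..1} = 1" using mu0_cdf[OF p, of 1] p by (simp add: F_p_def)
  moreover have "emeasure (mu0 p) {..1} = emeasure (mu0 p) {0..1}"
    unfolding mu0_def
    by (subst (1 2) emeasure_density) (auto intro!: nn_integral_cong simp: f_p_def indicator_def)
  moreover have "emeasure (mu0 p) UNIV = emeasure (mu0 p) {0..1}"
    unfolding mu0_def
    by (subst (1 2) emeasure_density) (auto intro!: nn_integral_cong simp: f_p_def indicator_def)
  ultimately show "emeasure (mu0 p) {0..1} = 1" "prob_space (mu0 p)"
    by (auto intro!: prob_spaceI simp: mu0_def)
qed

lemma cdf_eq_Fext:
  assumes p: "0 < p" "p < 1" and M: "prob_space M" "sets M = sets borel"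
    and c: "\<And>u. 0 \<le> u \<Longrightarrow> u \<le> 1 \<Longrightarrow> measure M {..u} = F_p p u"
  shows "measure M {..u} = Fext p u"
proof -
  have m0: "measure M {..0} = 0" using c[of 0] by (simp add: F_p_def)
  have m1: "measure M {..1} = 1" using c[of 1] p by (simp add: F_p_def)
  show ?thesis using cdf_outside[OF M m0 m1] c unfolding Fext_def by auto
qed

lemma mu0_stat:
  assumes p: "0 < p" "p < 1"
  shows "fitness_stationary p (mu0 p)"
proof -
  note b = mu0_basic[OF p]
  interpret N: prob_space "innovation p" using innov_prob p by simp
  interpret M0: prob_space "mu0 p" by (rule b(1))
  interpret P: prob_space "mu0 p \<Otimes>\<^sub>M innovation p"
    by (intro prob_space_pair b(1) N.prob_space_axioms)
  let ?D = "distr (mu0 p \<Otimes>\<^sub>M innovation p) borel fitness_step"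
  have pD: "prob_space ?D" by (rule P.prob_space_distr) (rule step_meas[OF b(2)])
  have c0: "measure (mu0 p) {..u} = F_p p u" if "0 \<le> u" "u \<le> 1" for u
    using mu0_cdf[OF p that] that p denom_pos[OF p that] by (simp add: measure_def F_p_def)
  have cD: "measure ?D {..u} = F_p p u" if u: "0 \<le> u" "u \<le> 1" for u
  proof -
    have d: "(1 - p) * u + p * (1 - u) \<noteq> 0" using denom_pos[OF p u] by simp
    have "measure ?D {..u} = (1-p)*u + (p*u + (1-p)*(1-u)) * F_p p u"
      using cdf_step[OF b(1,2) u, of p] c0[OF u] p by simp
    also have "\<dots> = F_p p u" unfolding F_p_def using d
      by (simp add: field_simps)
    finally show ?thesis .
  qed
  have "?D = mu0 p"
  proof (rule cdf_unique)
    show "real_distribution ?D" unfolding real_distribution_def real_distribution_axioms_def using pD by simp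
    show "real_distribution (mu0 p)" unfolding real_distribution_def real_distribution_axioms_def using b by simp
    show "cdf ?D = cdf (mu0 p)"
      by (rule ext, unfold cdf_def2, subst cdf_eq_Fext[OF p pD _ cD], simp, simp, simp,
          subst cdf_eq_Fext[OF p b(1,2) c0], simp_all)
  qed
  then show ?thesis using b unfolding fitness_stationary_def by simp
qed

theorem corollary2:
  fixes p :: real
  assumes "0 < p" and "p < 1"
  shows "(\<exists>!\<mu>. fitness_stationary p \<mu>) \<and>
         (\<forall>\<mu>. fitness_stationary p \<mu> \<longrightarrow>
            (\<forall>u\<in>{0..1}. measure \<mu> {..u} = F_p p u) \<and>
            \<mu> = density lborel (\<lambda>u. ennreal (indicator {0..1} u * f_p p u)) \<and>
            (\<forall>u\<in>{0<..1}. f_p p u = p / (1 - p) * (F_p p u / u) ^ 2))"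
proof -
  note p = assms
  have st0: "fitness_stationary p (mu0 p)" by (rule mu0_stat[OF p])
  have uniq: "\<mu> = mu0 p" if st: "fitness_stationary p \<mu>" for \<mu>
  proof (rule cdf_unique)
    show "real_distribution \<mu>" using st
      unfolding real_distribution_def real_distribution_axioms_def fitness_stationary_def by simp
    show "real_distribution (mu0 p)" using st0
      unfolding real_distribution_def real_distribution_axioms_def fitness_stationary_def by simp
    show "cdf \<mu> = cdf (mu0 p)"
      by (rule ext, unfold cdf_def2, simp only: stat_cdf_all[OF p st] stat_cdf_all[OF p st0])
  qed
  have alg: "f_p p u = p / (1 - p) * (F_p p u / u) ^ 2" if u: "u \<in> {0<..1}" for u
  proof -
    have u': "0 \<le> u" "u \<le> 1" "u \<noteq> 0" using u by auto
    have d: "(1 - p) * u + p * (1 - u) \<noteq> 0" using denom_pos[OF p u'(1,2)] by simp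
    have e: "(1 - 2 * p) * u + p = (1 - p) * u + p * (1 - u)" by (simp add: algebra_simps)
    have "F_p p u / u = (1 - p) / ((1 - p) * u + p * (1 - u))"
      unfolding F_p_def using u' by simp
    then have "p / (1 - p) * (F_p p u / u) ^ 2 = p / (1 - p) * ((1 - p)^2 / ((1 - p) * u + p * (1 - u))^2)"
      by (simp add: power_divide)
    also have "\<dots> = p * (1 - p) / ((1 - p) * u + p * (1 - u))^2"
      using p by (intro hlp) simp
    finally show ?thesis unfolding f_p_def e by simp
  qed
  have ex: "\<exists>!\<mu>. fitness_stationary p \<mu>"
    using st0 uniq by blast
  show ?thesis
    using ex uniq stat_cdf[OF p] alg by (auto simp: mu0_def)
qed

end
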